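(* Let $b>0$, $d\in\mathbb{N}^*$, and let $(G_n)_{n\ge0}$, $G_n=(V_n,E_n)$, be a $(b,d)$-expander. Let $\alpha\in\,]0,1/2[$ and $c\in\,]0,1[$. There is a positive constant $C'$, depending only on $\alpha$, $c$, $b$ and $d$, such that for $|V_n|$ large enough and for every $p\in[p_{n,\alpha}(c),p_{n,1-\alpha}(c)]$, \[ \frac{d\,\mathbb{E}_p(L_n^{(1)})}{dp}\geq C'|V_n|. \]
   Context: For a finite graph $G=(V,E)$, $E(A,B)$ is the set of edges with one endpoint in $A$ and the other in $B$, and the Cheeger constant is $c(G)=\min_{A\subset V,\,0<|A|\le |V|/2} |E(A,A^c)|/|A|$. A $(b,d)$-expander is a sequence of finite graphs $G_n=(V_n,E_n)$ such that for every $n$ the maximal degree of $G_n$ is at most $d$ and $c(G_n)>b$, with $|V_n|\to\infty$. Configurations $x\in\{0,1\}^{E_n}$ are identified with the spanning subgraph of $G_n$ keeping exactly the edges $e$ with $x(e)=1$; $\mu_{n,p}$ is the product measure on $\{0,1\}^{E_n}$ under which each $x(e)$ is independently $1$ with probability $p$ and $0$ otherwise, and $\mathbb{E}_p$ is its expectation. $L_n^{(1)}(x)$ is the number of vertices of the largest connected component of $x$. For $c\in]0,1[$ and $\alpha\in[0,1]$, $p_{n,\alpha}(c)$ is the unique $p\in[0,1]$ such that $\mu_{n,p}(L_n^{(1)}\ge c|V_n|)=\alpha$. *)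

theory Defs
  imports "HOL-Analysis.Analysis"
begin

definition graph :: "'a set \<Rightarrow> 'a set set \<Rightarrow> bool" where
  "graph V E \<longleftrightarrow> finite V \<and> (\<forall>e\<in>E. e \<subseteq> V \<and> card e = 2)"

definition degree :: "'a set set \<Rightarrow> 'a \<Rightarrow> nat" where
  "degree E v = card {e\<in>E. v \<in> e}"

definition max_degree :: "'a set \<Rightarrow> 'a set set \<Rightarrow> nat" where
  "max_degree V E = Max (insert 0 (degree E ` V))"

definition edges_between :: "'a set set \<Rightarrow> 'a set \<Rightarrow> 'a set \<Rightarrow> 'a set set" where
  "edges_between E A B = {e\<in>E. \<exists>x\<in>A. \<exists>y\<in>B. e = {x, y}}"

definition cheeger :: "'a set \<Rightarrow> 'a set set \<Rightarrow> real" where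
  "cheeger V E = Min {real (card (edges_between E A (V - A))) / real (card A) | A.
       A \<subseteq> V \<and> 0 < card A \<and> real (card A) \<le> real (card V) / 2}"

definition expander :: "real \<Rightarrow> nat \<Rightarrow> (nat \<Rightarrow> 'a set) \<Rightarrow> (nat \<Rightarrow> 'a set set) \<Rightarrow> bool" where
  "expander b d V E \<longleftrightarrow>
     (\<forall>n. graph (V n) (E n) \<and> max_degree (V n) (E n) \<le> d \<and> cheeger (V n) (E n) > b)
     \<and> filterlim (\<lambda>n. card (V n)) at_top sequentially"

text \<open>A configuration is identified with the set F of open edges (F \<subseteq> E).\<close>
definition connected_in :: "'a set set \<Rightarrow> 'a \<Rightarrow> 'a \<Rightarrow> bool" where
  "connected_in F = (\<lambda>u v. {u, v} \<in> F)\<^sup>*\<^sup>*"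

definition component :: "'a set \<Rightarrow> 'a set set \<Rightarrow> 'a \<Rightarrow> 'a set" where
  "component V F v = {w\<in>V. connected_in F v w}"

definition largest_comp :: "'a set \<Rightarrow> 'a set set \<Rightarrow> nat" where
  "largest_comp V F = Max (insert 0 ((\<lambda>v. card (component V F v)) ` V))"

definition perc_weight :: "'a set set \<Rightarrow> real \<Rightarrow> 'a set set \<Rightarrow> real" where
  "perc_weight E p F = p ^ card F * (1 - p) ^ (card E - card F)"

definition perc_prob :: "'a set set \<Rightarrow> real \<Rightarrow> ('a set set \<Rightarrow> bool) \<Rightarrow> real" where
  "perc_prob E p P = (\<Sum>F\<in>Pow E. if P F then perc_weight E p F else 0)"

definition perc_expect :: "'a set set \<Rightarrow> real \<Rightarrow> ('a set set \<Rightarrow> real) \<Rightarrow> real" where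
  "perc_expect E p f = (\<Sum>F\<in>Pow E. f F * perc_weight E p F)"

text \<open>p_{n,\<alpha>}(c): the unique p in [0,1] with mu_{n,p}(L \<ge> c|V|) = \<alpha>.\<close>
definition p_crit :: "'a set \<Rightarrow> 'a set set \<Rightarrow> real \<Rightarrow> real \<Rightarrow> real" where
  "p_crit V E \<alpha> c = (THE p. 0 \<le> p \<and> p \<le> 1 \<and>
      perc_prob E p (\<lambda>F. real (largest_comp V F) \<ge> c * real (card V)) = \<alpha>)"

end

theory Submission
  imports Defs
begin

lemma perc_weight_insert_out:
  assumes "finite E" "e \<notin> E" "F \<subseteq> E"
  shows "perc_weight (insert e E) q F = (1 - q) * perc_weight E q F"
proof -
  have "card F \<le> card E" using assms by (simp add: card_mono)
  then have "card (insert e E) - card F = Suc (card E - card F)" using assms by simp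
  then show ?thesis unfolding perc_weight_def by simp
qed

lemma perc_weight_insert_in:
  assumes "finite E" "e \<notin> E" "F \<subseteq> E"
  shows "perc_weight (insert e E) q (insert e F) = q * perc_weight E q F"
proof -
  have fF: "finite F" using assms finite_subset by blast
  have "e \<notin> F" using assms by blast
  then have "card (insert e F) = Suc (card F)" using fF by simp
  moreover have "card (insert e E) = Suc (card E)" using assms by simp
  ultimately show ?thesis unfolding perc_weight_def by simp
qed

lemma perc_expect_insert:
  assumes "finite E" "e \<notin> E"
  shows "perc_expect (insert e E) q h = q * perc_expect E q (\<lambda>F. h (insert e F)) + (1 - q) * perc_expect E q h"
proof -
  have pow: "Pow (insert e E) = Pow E \<union> insert e ` Pow E" by (rule Pow_insert)
  have disj: "Pow E \<inter> insert e ` Pow E = {}" using assms(2) by blast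
  have inj: "inj_on (insert e) (Pow E)" unfolding inj_on_def using assms(2) by (metis PowD in_mono insert_ident)
  have fin: "finite (Pow E)" using assms by simp
  have s1: "perc_expect (insert e E) q h = (\<Sum>F\<in>Pow E. h F * perc_weight (insert e E) q F)
        + (\<Sum>F\<in>insert e ` Pow E. h F * perc_weight (insert e E) q F)"
    unfolding perc_expect_def pow by (rule sum.union_disjoint) (use disj fin in auto)
  have s2: "(\<Sum>F\<in>insert e ` Pow E. h F * perc_weight (insert e E) q F)
        = (\<Sum>F\<in>Pow E. h (insert e F) * perc_weight (insert e E) q (insert e F))"
    using inj by (rule sum.reindex_cong) auto
  have s3: "(\<Sum>F\<in>Pow E. h (insert e F) * perc_weight (insert e E) q (insert e F)) = q * perc_expect E q (\<lambda>F. h (insert e F))"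
    unfolding perc_expect_def sum_distrib_left
  proof (rule sum.cong)
    fix F assume "F \<in> Pow E"
    then show "h (insert e F) * perc_weight (insert e E) q (insert e F) = q * (h (insert e F) * perc_weight E q F)"
      using perc_weight_insert_in[OF assms] by simp
  qed simp
  have s4: "(\<Sum>F\<in>Pow E. h F * perc_weight (insert e E) q F) = (1 - q) * perc_expect E q h"
    unfolding perc_expect_def sum_distrib_left
  proof (rule sum.cong)
    fix F assume "F \<in> Pow E"
    then show "h F * perc_weight (insert e E) q F = (1 - q) * (h F * perc_weight E q F)"
      using perc_weight_insert_out[OF assms] by simp
  qed simp
  show ?thesis using s1 s2 s3 s4 by simp
qed

lemma perc_expect_empty: "perc_expect {} q h = h {}"
  unfolding perc_expect_def perc_weight_def by simp

lemma perc_expect_cong: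
  assumes "\<And>F. F \<subseteq> E \<Longrightarrow> f F = g F"
  shows "perc_expect E q f = perc_expect E q g"
  unfolding perc_expect_def using assms by (intro sum.cong) auto

lemma perc_expect_add:
  "perc_expect E q (\<lambda>F. f F + g F) = perc_expect E q f + perc_expect E q g"
  unfolding perc_expect_def by (simp add: algebra_simps sum.distrib)

lemma perc_expect_diff:
  "perc_expect E q (\<lambda>F. f F - g F) = perc_expect E q f - perc_expect E q g"
  unfolding perc_expect_def by (simp add: algebra_simps sum_subtractf)

lemma perc_expect_sum:
  "perc_expect E q (\<lambda>F. \<Sum>i\<in>I. f i F) = (\<Sum>i\<in>I. perc_expect E q (f i))"
  unfolding perc_expect_def sum_distrib_right by (rule sum.swap)

lemma perc_expect_cmult:
  "perc_expect E q (\<lambda>F. a * f F) = a * perc_expect E q f"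
  unfolding perc_expect_def by (simp add: sum_distrib_left algebra_simps)

lemma russo:
  assumes "finite E"
  shows "((\<lambda>q. perc_expect E q h) has_real_derivative
           perc_expect E p (\<lambda>F. \<Sum>e\<in>E. h (insert e F) - h (F - {e}))) (at p)"
  using assms
proof (induction E arbitrary: h rule: finite_induct)
  case empty
  then show ?case by (simp add: perc_expect_empty)
next
  case (insert e E)
  define A where "A = (\<lambda>q. perc_expect E q (\<lambda>F. h (insert e F)))"
  define B where "B = (\<lambda>q. perc_expect E q h)"
  define A' where "A' = perc_expect E p (\<lambda>F. \<Sum>e'\<in>E. h (insert e (insert e' F)) - h (insert e (F - {e'})))"
  define B' where "B' = perc_expect E p (\<lambda>F. \<Sum>e'\<in>E. h (insert e' F) - h (F - {e'}))"
  have dA: "(A has_real_derivative A') (at p)" unfolding A_def A'_def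
    using insert.IH[of "\<lambda>F. h (insert e F)"] by simp
  have dB: "(B has_real_derivative B') (at p)" unfolding B_def B'_def
    using insert.IH[of h] by simp
  have eq: "(\<lambda>q. perc_expect (insert e E) q h) = (\<lambda>q. q * A q + (1 - q) * B q)"
    unfolding A_def B_def using insert.hyps by (simp add: perc_expect_insert)
  have d: "((\<lambda>q. q * A q + (1 - q) * B q) has_real_derivative
       (A p + p * A') + (- B p + (1 - p) * B')) (at p)"
    by (auto intro!: derivative_eq_intros dA dB)
  define D where "D = (\<lambda>F. \<Sum>e'\<in>insert e E. h (insert e' F) - h (F - {e'}))"
  have D1: "D (insert e F) = (h (insert e F) - h F) + (\<Sum>e'\<in>E. h (insert e (insert e' F)) - h (insert e (F - {e'})))"
    if "F \<subseteq> E" for F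
  proof -
    have "e \<notin> F" using that insert.hyps by blast
    then have a: "insert e F - {e} = F" by simp
    have "(\<Sum>e'\<in>E. h (insert e' (insert e F)) - h (insert e F - {e'})) =
          (\<Sum>e'\<in>E. h (insert e (insert e' F)) - h (insert e (F - {e'})))"
      by (rule sum.cong) (use insert.hyps in \<open>auto simp: insert_commute insert_Diff_if\<close>)
    then show ?thesis unfolding D_def using insert.hyps a by simp
  qed
  have D2: "D F = (h (insert e F) - h F) + (\<Sum>e'\<in>E. h (insert e' F) - h (F - {e'}))"
    if "F \<subseteq> E" for F
  proof -
    have "e \<notin> F" using that insert.hyps by blast
    then have a: "F - {e} = F" by simp
    then show ?thesis unfolding D_def using insert.hyps by simp
  qed
  have "perc_expect (insert e E) p D = p * perc_expect E p (\<lambda>F. D (insert e F)) + (1 - p) * perc_expect E p D"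
    using insert.hyps by (simp add: perc_expect_insert)
  also have "perc_expect E p (\<lambda>F. D (insert e F)) = (A p - B p) + A'"
    unfolding A_def B_def A'_def
    by (subst perc_expect_cong[OF D1]) (simp_all add: perc_expect_add perc_expect_diff)
  also have "perc_expect E p D = (A p - B p) + B'"
    unfolding A_def B_def B'_def
    by (subst perc_expect_cong[OF D2]) (simp_all add: perc_expect_add perc_expect_diff)
  finally have calc: "perc_expect (insert e E) p D = (A p + p * A') + (- B p + (1 - p) * B')"
    by (simp add: algebra_simps)
  show ?case unfolding D_def[symmetric] eq calc by (rule d)
qed

lemma perc_weight_nonneg: "0 \<le> p \<Longrightarrow> p \<le> 1 \<Longrightarrow> 0 \<le> perc_weight E p F"
  unfolding perc_weight_def by simp

lemma perc_weight_pos: "0 < p \<Longrightarrow> p < 1 \<Longrightarrow> 0 < perc_weight E p F"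
  unfolding perc_weight_def by simp

lemma perc_expect_mono:
  assumes "0 \<le> p" "p \<le> 1" "\<And>F. F \<subseteq> E \<Longrightarrow> f F \<le> g F"
  shows "perc_expect E p f \<le> perc_expect E p g"
  unfolding perc_expect_def
  by (rule sum_mono) (use assms perc_weight_nonneg in \<open>auto intro!: mult_right_mono\<close>)

lemma perc_expect_nonneg:
  assumes "0 \<le> p" "p \<le> 1" "\<And>F. F \<subseteq> E \<Longrightarrow> 0 \<le> f F"
  shows "0 \<le> perc_expect E p f"
  using perc_expect_mono[of p E "\<lambda>_. 0" f] assms by (simp add: perc_expect_def)

lemma perc_expect_const:
  assumes "finite E" shows "perc_expect E q (\<lambda>_. a) = a"
  using assms
proof (induction E rule: finite_induct)
  case empty then show ?case by (simp add: perc_expect_empty)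
next
  case (insert e E) then show ?case by (simp add: perc_expect_insert algebra_simps)
qed

lemma perc_expect_0:
  assumes "finite E" shows "perc_expect E 0 h = h {}"
  using assms
proof (induction E arbitrary: h rule: finite_induct)
  case empty then show ?case by (simp add: perc_expect_empty)
next
  case (insert e E) then show ?case by (simp add: perc_expect_insert)
qed

lemma perc_expect_1:
  assumes "finite E" shows "perc_expect E 1 h = h E"
  using assms
proof (induction E arbitrary: h rule: finite_induct)
  case empty then show ?case by (simp add: perc_expect_empty)
next
  case (insert e E) then show ?case by (simp add: perc_expect_insert)
qed

lemma perc_prob_expect:
  "perc_prob E p P = perc_expect E p (\<lambda>F. if P F then 1 else 0)"
  unfolding perc_prob_def perc_expect_def by (intro sum.cong) auto

lemma perc_expect_ge_term:
  assumes "finite E" "0 \<le> p" "p \<le> 1" "F0 \<subseteq> E" "\<And>F. F \<subseteq> E \<Longrightarrow> 0 \<le> f F"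
  shows "f F0 * perc_weight E p F0 \<le> perc_expect E p f"
  unfolding perc_expect_def
proof (rule member_le_sum)
  fix F assume "F \<in> Pow E - {F0}"
  then show "0 \<le> f F * perc_weight E p F" using assms perc_weight_nonneg[of p E F] by simp
qed (use assms in auto)

lemma closed_prob:
  assumes "finite E" "B \<subseteq> E"
  shows "perc_expect E p (\<lambda>F. if F \<inter> B = {} then 1 else 0) = (1 - p) ^ card B"
  using assms
proof (induction E arbitrary: B rule: finite_induct)
  case empty then show ?case by (simp add: perc_expect_empty)
next
  case (insert e E)
  show ?case
  proof (cases "e \<in> B")
    case True
    have fB: "finite B" using insert finite_subset by blast
    have B': "B - {e} \<subseteq> E" using insert by blast
    have "perc_expect E p (\<lambda>F. if insert e F \<inter> B = {} then 1 else 0) = 0"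
      using True by (simp add: perc_expect_def)
    moreover have "perc_expect E p (\<lambda>F. if F \<inter> B = {} then 1 else 0) =
                   perc_expect E p (\<lambda>F. if F \<inter> (B - {e}) = {} then 1 else 0)"
    proof (rule perc_expect_cong)
      fix F assume "F \<subseteq> E"
      then have "F \<inter> B = F \<inter> (B - {e})" using insert.hyps(2) by blast
      then show "(if F \<inter> B = {} then 1 else 0) = (if F \<inter> (B - {e}) = {} then 1 else (0::real))" by simp
    qed
    moreover have "card B = Suc (card (B - {e}))" using True fB
      by (metis card_Suc_Diff1)
    ultimately show ?thesis using insert.hyps insert.IH[OF B']
      by (simp add: perc_expect_insert)
  next
    case False
    have B': "B \<subseteq> E" using insert False by blast
    have "perc_expect E p (\<lambda>F. if insert e F \<inter> B = {} then 1 else 0) =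
                   perc_expect E p (\<lambda>F. if F \<inter> B = {} then 1 else 0)"
      using False by simp
    then show ?thesis using insert.hyps insert.IH[OF B']
      by (simp add: perc_expect_insert algebra_simps)
  qed
qed

definition incr_on :: "'a set set \<Rightarrow> ('a set set \<Rightarrow> bool) \<Rightarrow> bool" where
  "incr_on E P \<longleftrightarrow> (\<forall>F G. F \<subseteq> G \<longrightarrow> G \<subseteq> E \<longrightarrow> P F \<longrightarrow> P G)"

lemma exists_pivotal:
  assumes "finite E" "incr_on E P" "\<not> P {}" "P E"
  shows "\<exists>F e. F \<subseteq> E \<and> e \<in> E \<and> P (insert e F) \<and> \<not> P (F - {e})"
proof -
  define k where "k = (LEAST k. \<exists>F\<subseteq>E. P F \<and> card F = k)"
  have ex: "\<exists>F\<subseteq>E. P F \<and> card F = card E" using assms by blast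
  have "\<exists>F\<subseteq>E. P F \<and> card F = k" unfolding k_def by (rule LeastI_ex) (use ex in blast)
  then obtain F where F: "F \<subseteq> E" "P F" "card F = k" by blast
  have "F \<noteq> {}" using F assms by auto
  then obtain e where e: "e \<in> F" by blast
  have fF: "finite F" using F assms finite_subset by blast
  have "card (F - {e}) < k" using card_Diff1_less[OF fF e] F(3) by simp
  then have "\<not> P (F - {e})"
    using not_less_Least[of "card (F - {e})" "\<lambda>k. \<exists>F\<subseteq>E. P F \<and> card F = k"] F
    unfolding k_def by blast
  moreover have "insert e F = F" using e by blast
  ultimately show ?thesis using F e by (intro exI[of _ F] exI[of _ e]) auto
qed

lemma prob_deriv:
  assumes "finite E"
  shows "((\<lambda>q. perc_prob E q P) has_real_derivative
     perc_expect E p (\<lambda>F. \<Sum>e\<in>E. (if P (insert e F) then 1 else 0) - (if P (F - {e}) then 1 else 0))) (at p)"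
  unfolding perc_prob_expect by (rule russo[OF assms])

lemma prob_deriv_pos:
  assumes "finite E" "incr_on E P" "\<not> P {}" "P E" "0 < p" "p < 1"
  shows "0 < perc_expect E p (\<lambda>F. \<Sum>e\<in>E. (if P (insert e F) then 1 else 0) - (if P (F - {e}) then 1 else 0::real))"
proof -
  obtain F0 e0 where F0: "F0 \<subseteq> E" "e0 \<in> E" "P (insert e0 F0)" "\<not> P (F0 - {e0})"
    using exists_pivotal[OF assms(1-4)] by blast
  let ?g = "\<lambda>F e. (if P (insert e F) then 1 else 0) - (if P (F - {e}) then 1 else 0::real)"
  have nn: "0 \<le> ?g F e" if "F \<subseteq> E" "e \<in> E" for F e
  proof -
    have "F - {e} \<subseteq> insert e F" "insert e F \<subseteq> E" using that by auto
    then show ?thesis using assms(2) unfolding incr_on_def by auto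
  qed
  have "1 \<le> (\<Sum>e\<in>E. ?g F0 e)"
  proof -
    have "?g F0 e0 \<le> (\<Sum>e\<in>E. ?g F0 e)"
      by (rule member_le_sum) (use assms F0 nn in auto)
    then show ?thesis using F0 by simp
  qed
  moreover have "0 < perc_weight E p F0" using assms by (simp add: perc_weight_pos)
  ultimately have "0 < (\<Sum>e\<in>E. ?g F0 e) * perc_weight E p F0" by simp
  also have "\<dots> \<le> perc_expect E p (\<lambda>F. \<Sum>e\<in>E. ?g F e)"
    by (rule perc_expect_ge_term) (use assms F0 nn in \<open>auto intro: sum_nonneg\<close>)
  finally show ?thesis .
qed

lemma prob_strict_mono:
  assumes "finite E" "incr_on E P" "\<not> P {}" "P E" "0 \<le> x" "x < y" "y \<le> 1"
  shows "perc_prob E x P < perc_prob E y P"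
proof (rule DERIV_pos_imp_increasing_open[OF assms(6)])
  fix t assume "x < t" "t < y"
  then show "\<exists>z. ((\<lambda>q. perc_prob E q P) has_real_derivative z) (at t) \<and> 0 < z"
    using prob_deriv[OF assms(1)] prob_deriv_pos[OF assms(1-4)] assms by (meson le_less_trans less_le_trans)
next
  show "continuous_on {x..y} (\<lambda>q. perc_prob E q P)"
    using prob_deriv[OF assms(1)] by (meson DERIV_isCont continuous_at_imp_continuous_on)
qed

lemma prob_mono:
  assumes "finite E" "incr_on E P" "\<not> P {}" "P E" "0 \<le> x" "x \<le> y" "y \<le> 1"
  shows "perc_prob E x P \<le> perc_prob E y P"
proof (cases "x = y")
  case False
  then have "x < y" using assms by simp
  then show ?thesis using prob_strict_mono[OF assms(1-5) _ assms(7)] by simp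
qed simp

lemma p_crit_generic:
  assumes "finite E" "incr_on E P" "\<not> P {}" "P E" "0 < a" "a < 1"
  defines "pc \<equiv> (THE p. 0 \<le> p \<and> p \<le> 1 \<and> perc_prob E p P = a)"
  shows "0 \<le> pc \<and> pc \<le> 1 \<and> perc_prob E pc P = a"
  unfolding pc_def
proof (rule theI')
  have c: "continuous_on {0..1} (\<lambda>q. perc_prob E q P)"
    using prob_deriv[OF assms(1)] by (meson DERIV_isCont continuous_at_imp_continuous_on)
  have p0: "perc_prob E 0 P = 0" using assms by (simp add: perc_prob_expect perc_expect_0)
  have p1: "perc_prob E 1 P = 1" using assms by (simp add: perc_prob_expect perc_expect_1)
  obtain x where x: "0 \<le> x" "x \<le> 1" "perc_prob E x P = a"
    using IVT'[of "\<lambda>q. perc_prob E q P" 0 a 1, OF _ _ _ c] p0 p1 assms by auto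
  show "\<exists>!p. 0 \<le> p \<and> p \<le> 1 \<and> perc_prob E p P = a"
  proof (rule ex1I[of _ x])
    show "0 \<le> x \<and> x \<le> 1 \<and> perc_prob E x P = a" using x by simp
  next
    fix y assume y: "0 \<le> y \<and> y \<le> 1 \<and> perc_prob E y P = a"
    show "y = x"
    proof (rule ccontr)
      assume "y \<noteq> x"
      then consider "y < x" | "x < y" by linarith
      then show False
        using prob_strict_mono[OF assms(1-4)] x y by (cases; fastforce)
    qed
  qed
qed

lemma graph_edge_sub: "graph V E \<Longrightarrow> e \<in> E \<Longrightarrow> e \<subseteq> V"
  unfolding graph_def by simp

lemma conn_step: "connected_in F u v \<Longrightarrow> {v, w} \<in> F \<Longrightarrow> connected_in F u w"
  unfolding connected_in_def by (rule rtranclp.rtrancl_into_rtrancl)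

lemma conn_refl: "connected_in F u u"
  unfolding connected_in_def by simp

lemma conn_trans: "connected_in F u v \<Longrightarrow> connected_in F v w \<Longrightarrow> connected_in F u w"
  unfolding connected_in_def by (rule rtranclp_trans)

lemma conn_sym: "connected_in F u v \<Longrightarrow> connected_in F v u"
  unfolding connected_in_def
proof (induction rule: rtranclp_induct)
  case base then show ?case by simp
next
  case (step y z)
  then have "{z, y} \<in> F" by (simp add: insert_commute)
  then show ?case using step by (meson converse_rtranclp_into_rtranclp)
qed

lemma conn_mono:
  assumes "F \<subseteq> G" "connected_in F u v" shows "connected_in G u v"
  using assms(2) unfolding connected_in_def
proof (induction rule: rtranclp_induct)
  case base then show ?case by simp
next
  case (step y z)
  then have "{y, z} \<in> G" using assms(1) by blast
  then show ?case using step(3) by (rule rtranclp.rtrancl_into_rtrancl[rotated])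
qed

lemma conn_V:
  assumes "graph V E" "F \<subseteq> E" "connected_in F u v" "u \<in> V"
  shows "v \<in> V"
  using assms(3,4) unfolding connected_in_def
proof (induction rule: rtranclp_induct)
  case base then show ?case .
next
  case (step y z)
  then have "{y, z} \<in> E" using assms(2) by blast
  then have "{y, z} \<subseteq> V" by (rule graph_edge_sub[OF assms(1)])
  then show ?case by simp
qed

lemma conn_empty: "connected_in {} u v \<longleftrightarrow> u = v"
proof
  assume "connected_in {} u v" then show "u = v"
    unfolding connected_in_def by (induction rule: rtranclp_induct) auto
qed (simp add: conn_refl)

lemma comp_sub: "component V F v \<subseteq> V" unfolding component_def by blast

lemma graph_finite: "graph V E \<Longrightarrow> finite V" unfolding graph_def by blast

lemma comp_finite: "graph V E \<Longrightarrow> finite (component V F v)"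
  by (rule finite_subset[OF comp_sub graph_finite])

lemma comp_self: "v \<in> V \<Longrightarrow> v \<in> component V F v"
  unfolding component_def by (simp add: conn_refl)

lemma comp_mono: "F \<subseteq> G \<Longrightarrow> component V F v \<subseteq> component V G v"
  unfolding component_def by (auto intro: conn_mono)


lemma graph_E_finite: "graph V E \<Longrightarrow> finite E"
proof -
  assume g: "graph V E"
  then have "E \<subseteq> Pow V" unfolding graph_def by blast
  moreover have "finite (Pow V)" using graph_finite[OF g] by simp
  ultimately show "finite E" by (rule finite_subset)
qed

lemma L_max:
  assumes "graph V E" "v \<in> V"
  shows "card (component V F v) \<le> largest_comp V F"
  unfolding largest_comp_def using assms graph_finite by (intro Max_ge) auto

lemma L_attained:
  assumes "graph V E" "V \<noteq> {}"
  shows "\<exists>v\<in>V. card (component V F v) = largest_comp V F"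
proof -
  have fin: "finite (insert 0 ((\<lambda>v. card (component V F v)) ` V))" using assms graph_finite by auto
  have "largest_comp V F \<in> insert 0 ((\<lambda>v. card (component V F v)) ` V)"
    unfolding largest_comp_def using fin by (rule Max_in) simp
  moreover obtain v where "v \<in> V" using assms by blast
  moreover have "card (component V F v) \<ge> 1" using \<open>v \<in> V\<close> comp_self comp_finite[OF assms(1)]
    by (metis One_nat_def Suc_leI card_gt_0_iff empty_iff)
  ultimately show ?thesis using L_max[OF assms(1) \<open>v \<in> V\<close>, of F] by auto
qed

lemma L_le_card:
  assumes "graph V E"
  shows "largest_comp V F \<le> card V"
proof (cases "V = {}")
  case True then show ?thesis by (simp add: largest_comp_def)
next
  case False
  then obtain v where "v \<in> V" "card (component V F v) = largest_comp V F"
    using L_attained[OF assms] by blast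
  then show ?thesis using comp_sub card_mono graph_finite[OF assms] by metis
qed

lemma L_pos:
  assumes "graph V E" "V \<noteq> {}"
  shows "1 \<le> largest_comp V F"
proof -
  obtain v where "v \<in> V" using assms by blast
  have "card (component V F v) \<ge> 1" using \<open>v \<in> V\<close> comp_self comp_finite[OF assms(1)]
    by (metis One_nat_def Suc_leI card_gt_0_iff empty_iff)
  then show ?thesis using L_max[OF assms(1) \<open>v \<in> V\<close>, of F] by simp
qed

lemma L_mono:
  assumes "graph V E" "F \<subseteq> G"
  shows "largest_comp V F \<le> largest_comp V G"
proof (cases "V = {}")
  case True then show ?thesis by (simp add: largest_comp_def)
next
  case False
  then obtain v where "v \<in> V" "card (component V F v) = largest_comp V F"
    using L_attained[OF assms(1)] by blast
  moreover have "card (component V F v) \<le> card (component V G v)"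
    using comp_mono[OF assms(2)] comp_finite[OF assms(1)] card_mono by metis
  ultimately show ?thesis using L_max[OF assms(1) \<open>v \<in> V\<close>, of G] by simp
qed

lemma L_empty:
  assumes "graph V E" "V \<noteq> {}"
  shows "largest_comp V {} = 1"
proof -
  have "component V {} v = {v}" if "v \<in> V" for v
    unfolding component_def conn_empty using that by auto
  then have "\<forall>v\<in>V. card (component V {} v) = 1" by simp
  then show ?thesis using L_attained[OF assms, of "{}"] by force
qed

definition closed_set :: "'a set set \<Rightarrow> 'a set \<Rightarrow> bool" where
  "closed_set F S \<longleftrightarrow> (\<forall>u w. {u, w} \<in> F \<longrightarrow> u \<in> S \<longrightarrow> w \<in> S)"

lemma closed_conn:
  assumes "closed_set F S" "connected_in F u w" "u \<in> S" shows "w \<in> S"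
  using assms(2) unfolding connected_in_def
proof (induction rule: rtranclp_induct)
  case base then show ?case using assms(3) .
next
  case (step y z) then show ?case using assms(1) unfolding closed_set_def by simp
qed

lemma closed_comp:
  assumes "graph V E" "F \<subseteq> E"
  shows "closed_set F (component V F v)"
  unfolding closed_set_def
proof (intro allI impI)
  fix u w assume uw: "{u, w} \<in> F" "u \<in> component V F v"
  have "{u, w} \<in> E" using assms(2) uw(1) by (rule subsetD)
  then have "{u, w} \<subseteq> V" by (rule graph_edge_sub[OF assms(1)])
  then have wV: "w \<in> V" by simp
  have "connected_in F v u" using uw(2) unfolding component_def by simp
  then have "connected_in F v w" using uw(1) by (rule conn_step)
  then show "w \<in> component V F v" using wV unfolding component_def by simp
qed

lemma closed_compl:
  assumes "graph V E" "F \<subseteq> E" "closed_set F S"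
  shows "closed_set F (V - S)"
  unfolding closed_set_def
proof (intro allI impI)
  fix u w assume uw: "{u, w} \<in> F" "u \<in> V - S"
  have "{u, w} \<in> E" using assms(2) uw(1) by (rule subsetD)
  then have "{u, w} \<subseteq> V" by (rule graph_edge_sub[OF assms(1)])
  then have "w \<in> V" by simp
  moreover have "w \<notin> S"
  proof
    assume "w \<in> S"
    moreover have "{w, u} \<in> F" using uw(1) by (simp add: insert_commute)
    ultimately have "u \<in> S" using assms(3) unfolding closed_set_def by simp
    then show False using uw(2) by simp
  qed
  ultimately show "w \<in> V - S" by simp
qed

lemma closed_boundary:
  assumes "closed_set F S"
  shows "F \<inter> edges_between E S (V - S) = {}"
proof (rule ccontr)
  assume "F \<inter> edges_between E S (V - S) \<noteq> {}"
  then obtain x y where "{x, y} \<in> F" "x \<in> S" "y \<in> V - S" unfolding edges_between_def by blast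
  then show False using assms unfolding closed_set_def by simp
qed

lemma edges_between_sym: "edges_between E A B = edges_between E B A"
  unfolding edges_between_def by (auto simp: insert_commute)

lemma cheeger_bound:
  assumes "graph V E" "cheeger V E > b" "A \<subseteq> V" "0 < card A" "real (card A) \<le> real (card V) / 2"
  shows "b * card A < card (edges_between E A (V - A))"
proof -
  let ?S = "{real (card (edges_between E A (V - A))) / real (card A) | A.
       A \<subseteq> V \<and> 0 < card A \<and> real (card A) \<le> real (card V) / 2}"
  have "?S \<subseteq> (\<lambda>A. real (card (edges_between E A (V - A))) / real (card A)) ` Pow V" by blast
  then have fin: "finite ?S" using graph_finite[OF assms(1)] finite_subset by blast
  have "cheeger V E \<le> real (card (edges_between E A (V - A))) / real (card A)"
    unfolding cheeger_def by (rule Min_le[OF fin]) (use assms in blast)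
  then have "b < real (card (edges_between E A (V - A))) / real (card A)" using assms(2) by linarith
  then show ?thesis using assms(4) by (simp add: pos_less_divide_eq)
qed

lemma boundary_card:
  assumes "graph V E" "cheeger V E > b" "b \<ge> 0" "C \<subseteq> V" "C \<noteq> {}" "C \<noteq> V"
  shows "b * min (card C) (card V - card C) < card (edges_between E C (V - C))"
proof -
  have fV: "finite V" using graph_finite[OF assms(1)] .
  have cC: "0 < card C" using assms fV by (meson card_gt_0_iff finite_subset)
  have cVC: "card (V - C) = card V - card C" using assms fV by (meson card_Diff_subset finite_subset)
  have cVC0: "0 < card (V - C)" using assms fV by (metis Diff_eq_empty_iff card_gt_0_iff finite_Diff subset_antisym)
  have cle: "card C \<le> card V" using assms fV card_mono by blast
  show ?thesis
  proof (cases "real (card C) \<le> real (card V) / 2")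
    case True
    have "b * min (card C) (card V - card C) \<le> b * card C" using assms(3) by (simp add: mult_left_mono)
    also have "\<dots> < card (edges_between E C (V - C))" using cheeger_bound[OF assms(1,2,4) cC True] .
    finally show ?thesis .
  next
    case False
    have h: "real (card (V - C)) \<le> real (card V) / 2" using False cVC cle by (simp add: of_nat_diff)
    have "V - (V - C) = C" using assms by blast
    then have eb: "edges_between E (V - C) (V - (V - C)) = edges_between E C (V - C)"
      using edges_between_sym by metis
    have "b * min (card C) (card V - card C) \<le> b * card (V - C)" using assms(3) cVC by (simp add: mult_left_mono)
    also have "\<dots> < card (edges_between E (V - C) (V - (V - C)))"
      using cheeger_bound[OF assms(1,2) _ cVC0 h] by blast
    finally show ?thesis using eb by simp
  qed
qed

lemma connected_full:
  assumes "graph V E" "cheeger V E > b" "b \<ge> 0" "V \<noteq> {}"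
  shows "largest_comp V E = card V"
proof -
  obtain v where v: "v \<in> V" using assms by blast
  let ?C = "component V E v"
  have "?C = V"
  proof (rule ccontr)
    assume ne: "?C \<noteq> V"
    have "0 < card (edges_between E ?C (V - ?C))"
      using boundary_card[OF assms(1-3) comp_sub _ ne] comp_self[OF v] assms(3)
      by (smt (verit) empty_iff mult_nonneg_nonneg of_nat_0_le_iff of_nat_0_less_iff)
    then have "edges_between E ?C (V - ?C) \<noteq> {}" by (metis card.empty less_irrefl)
    then obtain e where "e \<in> edges_between E ?C (V - ?C)" by blast
    moreover have "e \<in> E" using calculation unfolding edges_between_def by blast
    ultimately show False using closed_boundary[OF closed_comp[OF assms(1), of E]] by blast
  qed
  then have "card V \<le> largest_comp V E" using L_max[OF assms(1) v, of E] by simp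
  then show ?thesis using L_le_card[OF assms(1), of E] by simp
qed

lemma L_term_nonneg:
  assumes "graph V E"
  shows "0 \<le> real (largest_comp V (insert e F)) - real (largest_comp V (F - {e}))"
proof -
  have "F - {e} \<subseteq> insert e F" by blast
  then show ?thesis using L_mono[OF assms] by simp
qed

lemma L_insert_boundary:
  assumes "graph V E" "F \<subseteq> E" "v \<in> V" "e \<in> edges_between E (component V F v) (V - component V F v)"
  shows "card (component V F v) + 1 \<le> largest_comp V (insert e F)"
proof -
  let ?C = "component V F v"
  obtain x y where xy: "e = {x, y}" "x \<in> ?C" "y \<in> V - ?C" using assms(4) unfolding edges_between_def by blast
  have "insert y ?C \<subseteq> component V (insert e F) v"
  proof
    fix w assume "w \<in> insert y ?C"
    then consider "w = y" | "w \<in> ?C" by blast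
    then show "w \<in> component V (insert e F) v"
    proof cases
      case 1
      have "connected_in F v x" using xy(2) unfolding component_def by simp
      then have "connected_in (insert e F) v x" by (rule conn_mono[rotated]) blast
      moreover have "{x, y} \<in> insert e F" using xy(1) by simp
      ultimately have "connected_in (insert e F) v y" by (rule conn_step)
      then show ?thesis using 1 xy(3) unfolding component_def by simp
    next
      case 2
      then show ?thesis using comp_mono[of F "insert e F" V v] by blast
    qed
  qed
  then have "card (insert y ?C) \<le> card (component V (insert e F) v)"
    using comp_finite[OF assms(1)] by (rule card_mono[rotated])
  moreover have "card (insert y ?C) = card ?C + 1" using xy(3) comp_finite[OF assms(1)] by simp
  ultimately show ?thesis using L_max[OF assms(1,3), of "insert e F"] by simp
qed

lemma g_bound:
  assumes "graph V E" "cheeger V E > b" "b \<ge> 0" "V \<noteq> {}" "F \<subseteq> E"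
  shows "b * min (real (largest_comp V F)) (real (card V) - real (largest_comp V F))
         \<le> (\<Sum>e\<in>E. real (largest_comp V (insert e F)) - real (largest_comp V (F - {e})))"
proof -
  let ?g = "\<lambda>e. real (largest_comp V (insert e F)) - real (largest_comp V (F - {e}))"
  have nn: "\<And>e. 0 \<le> ?g e" using L_term_nonneg[OF assms(1)] .
  have fE: "finite E" using graph_E_finite[OF assms(1)] .
  obtain v where v: "v \<in> V" "card (component V F v) = largest_comp V F"
    using L_attained[OF assms(1,4)] by blast
  let ?C = "component V F v"
  have LN: "largest_comp V F \<le> card V" using L_le_card[OF assms(1)] .
  show ?thesis
  proof (cases "?C = V")
    case True
    then have "real (card V) - real (largest_comp V F) = 0" using v by simp
    then have "b * min (real (largest_comp V F)) (real (card V) - real (largest_comp V F)) = 0"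
      by simp
    moreover have "0 \<le> (\<Sum>e\<in>E. ?g e)" using nn by (rule sum_nonneg)
    ultimately show ?thesis by linarith
  next
    case False
    let ?B = "edges_between E ?C (V - ?C)"
    have BE: "?B \<subseteq> E" unfolding edges_between_def by blast
    have bd: "b * min (card ?C) (card V - card ?C) < card ?B"
      using boundary_card[OF assms(1-3) comp_sub _ False] comp_self[OF v(1)] by blast
    have closedC: "F \<inter> ?B = {}" using closed_boundary[OF closed_comp[OF assms(1,5)]] .
    have ge1: "1 \<le> ?g e" if "e \<in> ?B" for e
    proof -
      have "e \<notin> F" using that closedC by blast
      then have "F - {e} = F" by simp
      moreover have "card ?C + 1 \<le> largest_comp V (insert e F)"
        using L_insert_boundary[OF assms(1,5) v(1) that] .
      ultimately show ?thesis using v(2) by simp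
    qed
    have "real (card ?B) = (\<Sum>e\<in>?B. 1)" by simp
    also have "\<dots> \<le> (\<Sum>e\<in>?B. ?g e)" using ge1 by (rule sum_mono)
    also have "\<dots> \<le> (\<Sum>e\<in>E. ?g e)" using fE BE nn by (intro sum_mono2) auto
    finally have "real (card ?B) \<le> (\<Sum>e\<in>E. ?g e)" .
    moreover have "real (min (card ?C) (card V - card ?C)) =
        min (real (largest_comp V F)) (real (card V) - real (largest_comp V F))"
      using v(2) LN by (simp add: of_nat_diff)
    ultimately show ?thesis using bd by simp
  qed
qed

definition iso :: "'a set \<Rightarrow> 'a set set \<Rightarrow> 'a set set \<Rightarrow> 'a set" where
  "iso V E F = {v\<in>V. \<forall>e\<in>E. v \<in> e \<longrightarrow> e \<notin> F}"

lemma iso_bound: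
  assumes "graph V E" "F \<subseteq> E" "V \<noteq> {}"
  shows "real (card (iso V E F)) \<le> real (card V) - real (largest_comp V F) + 1"
proof -
  obtain v where v: "v \<in> V" "card (component V F v) = largest_comp V F"
    using L_attained[OF assms(1,3)] by blast
  let ?C = "component V F v"
  have sub: "iso V E F \<subseteq> insert v (V - ?C)"
  proof
    fix w assume w: "w \<in> iso V E F"
    show "w \<in> insert v (V - ?C)"
    proof (cases "w \<in> ?C")
      case True
      then have "connected_in F v w" unfolding component_def by simp
      then have "(\<lambda>u v. {u, v} \<in> F)\<^sup>*\<^sup>* v w" unfolding connected_in_def .
      then have "w = v"
      proof (cases rule: rtranclp.cases)
        case (rtrancl_into_rtrancl y)
        then have "{y, w} \<in> E" using assms(2) by blast
        moreover have "w \<in> {y, w}" by simp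
        ultimately have "{y, w} \<notin> F" using w unfolding iso_def by blast
        then show ?thesis using rtrancl_into_rtrancl by simp
      qed simp
      then show ?thesis by simp
    next
      case False
      then show ?thesis using w unfolding iso_def by blast
    qed
  qed
  have fV: "finite V" using graph_finite[OF assms(1)] .
  have "card (iso V E F) \<le> card (insert v (V - ?C))"
    using sub fV by (intro card_mono) auto
  also have "\<dots> \<le> card (V - ?C) + 1" using fV by (simp add: card_insert_if)
  also have "card (V - ?C) = card V - card ?C" using fV comp_sub by (meson card_Diff_subset finite_subset)
  finally have "card (iso V E F) \<le> card V - largest_comp V F + 1" using v(2) by simp
  moreover have "largest_comp V F \<le> card V" using L_le_card[OF assms(1)] .
  ultimately show ?thesis by (simp add: of_nat_diff)
qed

lemma closed_Un: "closed_set F A \<Longrightarrow> closed_set F B \<Longrightarrow> closed_set F (A \<union> B)"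
  unfolding closed_set_def by blast

lemma greedy:
  assumes "graph V E" "F \<subseteq> E" "V \<noteq> {}"
  shows "t \<le> card V \<Longrightarrow> \<exists>S\<subseteq>V. closed_set F S \<and> t \<le> card S \<and> card S < t + largest_comp V F"
proof (induction t)
  case 0
  have "closed_set F {}" unfolding closed_set_def by simp
  then show ?case using L_pos[OF assms(1,3), of F] by (intro exI[of _ "{}"]) simp
next
  case (Suc t)
  then obtain S where S: "S \<subseteq> V" "closed_set F S" "t \<le> card S" "card S < t + largest_comp V F" by auto
  show ?case
  proof (cases "Suc t \<le> card S")
    case True then show ?thesis using S by (intro exI[of _ S]) simp
  next
    case False
    have fV: "finite V" using graph_finite[OF assms(1)] .
    have fS: "finite S" using finite_subset[OF S(1) fV] .
    have "card S < card V" using False S Suc.prems by simp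
    have "V - S \<noteq> {}"
    proof
      assume "V - S = {}"
      then have "V \<subseteq> S" by blast
      then have "card V \<le> card S" using fS by (rule card_mono[rotated])
      then show False using \<open>card S < card V\<close> by simp
    qed
    then obtain v where v: "v \<in> V" "v \<notin> S" by blast
    let ?C = "component V F v"
    have disj: "S \<inter> ?C = {}"
    proof (rule ccontr)
      assume "S \<inter> ?C \<noteq> {}"
      then obtain w where w: "w \<in> ?C" "w \<in> S" by blast
      then have "connected_in F v w" unfolding component_def by simp
      then have "connected_in F w v" by (rule conn_sym)
      then have "v \<in> S" using closed_conn[OF S(2)] w(2) by blast
      then show False using v by simp
    qed
    have cl: "closed_set F (S \<union> ?C)" using S(2) closed_comp[OF assms(1,2), of v] by (rule closed_Un)
    have fC: "finite ?C" using comp_finite[OF assms(1)] .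
    have cU: "card (S \<union> ?C) = card S + card ?C" using fS fC disj by (rule card_Un_disjoint)
    have "?C \<noteq> {}" using comp_self[OF v(1)] by blast
    then have c1: "1 \<le> card ?C" using fC by (simp add: Suc_leI card_gt_0_iff)
    have c2: "card ?C \<le> largest_comp V F" using L_max[OF assms(1) v(1)] .
    have c3: "card S = t" using False S by simp
    have sub: "S \<union> ?C \<subseteq> V" using S(1) comp_sub[of V F v] by (rule Un_least)
    have "Suc t \<le> card (S \<union> ?C) \<and> card (S \<union> ?C) < Suc t + largest_comp V F"
      using cU c1 c2 c3 by simp
    then show ?thesis using cl sub by blast
  qed
qed

lemma cut_exists:
  assumes "graph V E" "F \<subseteq> E" "0 < c" "c < 1" "card V \<ge> 4"
    and small: "real (largest_comp V F) < c * real (card V)"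
  shows "\<exists>T\<subseteq>V. closed_set F T \<and> min (1/4) (1 - c) * real (card V) \<le> real (card T)
            \<and> real (card T) \<le> real (card V) / 2"
proof -
  define N where "N = real (card V)"
  have fV: "finite V" using graph_finite[OF assms(1)] .
  have V0: "V \<noteq> {}" using assms(5) by auto
  have N4: "N \<ge> 4" using assms(5) unfolding N_def by simp
  have kN: "min (1/4) (1 - c) * N \<le> N / 4" using N4 by (simp add: min_def)
  have kN2: "min (1/4) (1 - c) * N \<le> (1 - c) * N" using N4 by (simp add: min_def)
  have compl: "real (card (V - S)) = N - real (card S)" if "S \<subseteq> V" for S
  proof -
    have a: "card (V - S) = card V - card S" using card_Diff_subset[OF finite_subset[OF that fV] that] .
    have "card S \<le> card V" using card_mono[OF fV that] .
    then show ?thesis using a unfolding N_def by (simp add: of_nat_diff)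
  qed
  have "\<exists>T\<subseteq>V. closed_set F T \<and> min (1/4) (1 - c) * N \<le> real (card T) \<and> real (card T) \<le> N / 2"
  proof (cases "real (largest_comp V F) \<ge> N / 4")
    case True
    obtain v where v: "v \<in> V" "card (component V F v) = largest_comp V F"
      using L_attained[OF assms(1) V0] by blast
    let ?C = "component V F v"
    have clC: "closed_set F ?C" using closed_comp[OF assms(1,2)] .
    show ?thesis
    proof (cases "real (card ?C) \<le> N / 2")
      case True
      have "min (1/4) (1 - c) * N \<le> real (card ?C)"
        using \<open>real (largest_comp V F) \<ge> N / 4\<close> v(2) kN by simp
      then show ?thesis using comp_sub[of V F v] clC True by (intro exI[of _ ?C] conjI) assumption+
    next
      case False
      have cc: "real (card (V - ?C)) = N - real (card ?C)" using compl[OF comp_sub] .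
      have "closed_set F (V - ?C)" using closed_compl[OF assms(1,2) clC] .
      moreover have "min (1/4) (1 - c) * N \<le> real (card (V - ?C))"
      proof -
        have "(1 - c) * N = N - c * N" by (simp add: algebra_simps)
        then show ?thesis using cc v(2) small kN2 unfolding N_def by linarith
      qed
      moreover have "real (card (V - ?C)) \<le> N / 2" using cc False by simp
      moreover have "V - ?C \<subseteq> V" by blast
      ultimately show ?thesis by (intro exI[of _ "V - ?C"] conjI) assumption+
    qed
  next
    case False
    define t where "t = nat \<lceil>N / 4\<rceil>"
    have c0: "0 \<le> \<lceil>N / 4\<rceil>" using N4 by simp
    have rt: "real t = real_of_int \<lceil>N / 4\<rceil>" unfolding t_def using c0 by simp
    have t1: "N / 4 \<le> real t" unfolding rt by (rule le_of_int_ceiling)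
    have t2: "real t \<le> N / 4 + 1" unfolding rt by (rule of_int_ceiling_le_add_one)
    have "t \<le> card V" using t2 N4 unfolding N_def by linarith
    then obtain S where S: "S \<subseteq> V" "closed_set F S" "t \<le> card S" "card S < t + largest_comp V F"
      using greedy[OF assms(1,2) V0] by blast
    have s1: "N / 4 \<le> real (card S)" using S(3) t1 by linarith
    have "real (card S) < real t + real (largest_comp V F)" using S(4) by linarith
    then have s2: "real (card S) < N / 2 + 1" using t2 False by linarith
    show ?thesis
    proof (cases "real (card S) \<le> N / 2")
      case True
      have "min (1/4) (1 - c) * N \<le> real (card S)" using s1 kN by linarith
      then show ?thesis using S(1,2) True by (intro exI[of _ S] conjI) assumption+
    next
      case False
      have cc: "real (card (V - S)) = N - real (card S)" using compl[OF S(1)] .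
      have "closed_set F (V - S)" using closed_compl[OF assms(1,2) S(2)] .
      moreover have "min (1/4) (1 - c) * N \<le> real (card (V - S))"
        using cc s2 kN N4 by linarith
      moreover have "real (card (V - S)) \<le> N / 2" using cc False by simp
      moreover have "V - S \<subseteq> V" by blast
      ultimately show ?thesis by (intro exI[of _ "V - S"] conjI) assumption+
    qed
  qed
  then show ?thesis unfolding N_def .
qed

lemma union_bound:
  assumes "0 \<le> p" "p \<le> 1" "finite I" "\<And>F. F \<subseteq> E \<Longrightarrow> P F \<Longrightarrow> \<exists>S\<in>I. Q S F"
  shows "perc_prob E p P \<le> (\<Sum>S\<in>I. perc_prob E p (Q S))"
proof -
  have "perc_expect E p (\<lambda>F. if P F then 1 else 0) \<le> perc_expect E p (\<lambda>F. \<Sum>S\<in>I. if Q S F then 1 else 0)"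
  proof (rule perc_expect_mono[OF assms(1,2)])
    fix F assume F: "F \<subseteq> E"
    show "(if P F then 1 else 0) \<le> (\<Sum>S\<in>I. if Q S F then 1 else (0::real))"
    proof (cases "P F")
      case True
      then obtain S0 where S0: "S0 \<in> I" "Q S0 F" using assms(4)[OF F] by blast
      have "(if Q S0 F then 1 else (0::real)) \<le> (\<Sum>S\<in>I. if Q S F then 1 else 0)"
        by (rule member_le_sum) (use S0 assms(3) in auto)
      then show ?thesis using True S0 by simp
    next
      case False then show ?thesis by (simp add: sum_nonneg)
    qed
  qed
  then show ?thesis unfolding perc_prob_expect perc_expect_sum .
qed

lemma low_bound:
  assumes g: "graph V E" and ch: "cheeger V E > b" and b: "b > 0" and c: "0 < c" "c < 1"
    and N4: "card V \<ge> 4" and p: "0 \<le> p" "p < 1"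
  shows "perc_prob E p (\<lambda>F. \<not> c * real (card V) \<le> real (largest_comp V F))
     \<le> 2 ^ card V * (1 - p) powr (b * min (1/4) (1 - c) * real (card V))"
proof -
  define \<kappa> where "\<kappa> = min (1/4) (1 - c)"
  define N where "N = real (card V)"
  define I where "I = {T\<in>Pow V. \<kappa> * N \<le> real (card T) \<and> real (card T) \<le> N / 2}"
  have fV: "finite V" using graph_finite[OF g] .
  have fE: "finite E" using graph_E_finite[OF g] .
  have fI: "finite I" unfolding I_def using fV by simp
  have kpos: "0 < \<kappa>" unfolding \<kappa>_def using c by simp
  have Npos: "0 < N" unfolding N_def using N4 by simp
  let ?Q = "\<lambda>T F. F \<inter> edges_between E T (V - T) = {}"
  have "perc_prob E p (\<lambda>F. \<not> c * real (card V) \<le> real (largest_comp V F)) \<le> (\<Sum>T\<in>I. perc_prob E p (?Q T))"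
  proof (rule union_bound[OF p(1) _ fI])
    show "p \<le> 1" using p by simp
  next
    fix F assume F: "F \<subseteq> E" "\<not> c * real (card V) \<le> real (largest_comp V F)"
    then have "real (largest_comp V F) < c * real (card V)" by simp
    then obtain T where T: "T \<subseteq> V" "closed_set F T" "\<kappa> * N \<le> real (card T)" "real (card T) \<le> N / 2"
      using cut_exists[OF g F(1) c N4] unfolding \<kappa>_def N_def by blast
    have "T \<in> I" unfolding I_def using T by simp
    moreover have "?Q T F" using closed_boundary[OF T(2)] .
    ultimately show "\<exists>T\<in>I. ?Q T F" by blast
  qed
  also have "\<dots> \<le> (\<Sum>T\<in>I. (1 - p) powr (b * \<kappa> * N))"
  proof (rule sum_mono)
    fix T assume "T \<in> I"
    then have T: "T \<subseteq> V" "\<kappa> * N \<le> real (card T)" "real (card T) \<le> N / 2" unfolding I_def by auto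
    have Tpos: "0 < card T" using T(2) kpos Npos
      by (metis gr0I mult_pos_pos not_le of_nat_0)
    let ?B = "edges_between E T (V - T)"
    have BE: "?B \<subseteq> E" unfolding edges_between_def by blast
    have "b * card T < card ?B" using cheeger_bound[OF g ch T(1) Tpos] T(3) unfolding N_def by simp
    moreover have "b * (\<kappa> * N) \<le> b * card T" using T(2) b by (simp add: mult_left_mono)
    ultimately have kb: "b * \<kappa> * N \<le> real (card ?B)" by simp
    have "perc_prob E p (?Q T) = (1 - p) ^ card ?B"
      unfolding perc_prob_expect using closed_prob[OF fE BE] .
    also have "\<dots> = (1 - p) powr real (card ?B)" using p by (simp add: powr_realpow)
    also have "\<dots> \<le> (1 - p) powr (b * \<kappa> * N)" using kb p by (intro powr_mono') auto
    finally show "perc_prob E p (?Q T) \<le> (1 - p) powr (b * \<kappa> * N)" .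
  qed
  also have "\<dots> = real (card I) * (1 - p) powr (b * \<kappa> * N)" by simp
  also have "\<dots> \<le> 2 ^ card V * (1 - p) powr (b * \<kappa> * N)"
  proof (rule mult_right_mono)
    have "card I \<le> card (Pow V)" unfolding I_def using fV by (intro card_mono) auto
    then have "card I \<le> 2 ^ card V" using fV by (simp add: card_Pow)
    then show "real (card I) \<le> 2 ^ card V" by (metis of_nat_le_iff of_nat_numeral of_nat_power)
  qed simp
  finally show ?thesis unfolding \<kappa>_def N_def .
qed

lemma chebyshev_low:
  assumes fE: "finite E" and p: "0 \<le> p" "p \<le> 1"
    and mu: "\<mu> = perc_expect E p X" "0 < \<mu>"
  shows "(\<mu> / 2)^2 * perc_prob E p (\<lambda>F. X F < \<mu> / 2) \<le> perc_expect E p (\<lambda>F. (X F)^2) - \<mu>^2"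
proof -
  have "(\<mu> / 2)^2 * perc_prob E p (\<lambda>F. X F < \<mu> / 2) = perc_expect E p (\<lambda>F. (\<mu> / 2)^2 * (if X F < \<mu> / 2 then 1 else 0))"
    unfolding perc_prob_expect perc_expect_cmult ..
  also have "\<dots> \<le> perc_expect E p (\<lambda>F. (X F - \<mu>)^2)"
  proof (rule perc_expect_mono[OF p])
    fix F
    show "(\<mu> / 2)^2 * (if X F < \<mu> / 2 then 1 else 0) \<le> (X F - \<mu>)^2"
    proof (cases "X F < \<mu> / 2")
      case True
      then have "\<mu> / 2 \<le> \<mu> - X F" by simp
      moreover have "0 \<le> \<mu> / 2" using mu by simp
      ultimately have "(\<mu> / 2)^2 \<le> (\<mu> - X F)^2" by (rule power_mono)
      then show ?thesis using True by (simp add: power2_commute)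
    qed simp
  qed
  also have "perc_expect E p (\<lambda>F. (X F - \<mu>)^2) = perc_expect E p (\<lambda>F. (X F)^2 + ((-2 * \<mu>) * X F + \<mu>^2))"
    by (rule perc_expect_cong) (simp add: power2_diff algebra_simps)
  also have "\<dots> = perc_expect E p (\<lambda>F. (X F)^2) - \<mu>^2"
    unfolding perc_expect_add perc_expect_cmult perc_expect_const[OF fE] mu(1)[symmetric]
    by (simp add: power2_eq_square)
  finally show ?thesis .
qed

lemma iso_eq: "iso V E F = {v\<in>V. F \<inter> {e\<in>E. v \<in> e} = {}}"
  unfolding iso_def by blast

lemma iso_card_sum:
  assumes "finite V"
  shows "real (card (iso V E F)) = (\<Sum>v\<in>V. if F \<inter> {e\<in>E. v \<in> e} = {} then 1 else 0)"
proof -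
  have "real (card (iso V E F)) = (\<Sum>v\<in>iso V E F. 1)" by simp
  also have "\<dots> = (\<Sum>v\<in>V. if F \<inter> {e\<in>E. v \<in> e} = {} then 1 else 0)"
    unfolding iso_eq using assms by (rule sum.inter_filter)
  finally show ?thesis .
qed

lemma iso_expect:
  assumes g: "graph V E"
  shows "perc_expect E p (\<lambda>F. real (card (iso V E F))) = (\<Sum>v\<in>V. (1 - p) ^ card {e\<in>E. v \<in> e})"
proof -
  have fV: "finite V" using graph_finite[OF g] .
  have fE: "finite E" using graph_E_finite[OF g] .
  have "perc_expect E p (\<lambda>F. real (card (iso V E F))) =
        (\<Sum>v\<in>V. perc_expect E p (\<lambda>F. if F \<inter> {e\<in>E. v \<in> e} = {} then 1 else 0))"
    unfolding iso_card_sum[OF fV] perc_expect_sum ..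
  also have "\<dots> = (\<Sum>v\<in>V. (1 - p) ^ card {e\<in>E. v \<in> e})"
    by (rule sum.cong[OF refl], rule closed_prob[OF fE]) blast
  finally show ?thesis .
qed

lemma iso_sq_expect:
  assumes g: "graph V E"
  shows "perc_expect E p (\<lambda>F. (real (card (iso V E F)))^2) =
     (\<Sum>u\<in>V. \<Sum>v\<in>V. (1 - p) ^ card ({e\<in>E. u \<in> e} \<union> {e\<in>E. v \<in> e}))"
proof -
  have fV: "finite V" using graph_finite[OF g] .
  have fE: "finite E" using graph_E_finite[OF g] .
  let ?d = "\<lambda>v. {e\<in>E. v \<in> e}"
  have sq: "(real (card (iso V E F)))^2 = (\<Sum>u\<in>V. \<Sum>v\<in>V. if F \<inter> (?d u \<union> ?d v) = {} then 1 else 0)" for F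
  proof -
    have "(real (card (iso V E F)))^2 = (\<Sum>u\<in>V. if F \<inter> ?d u = {} then 1 else 0) * (\<Sum>v\<in>V. if F \<inter> ?d v = {} then 1 else (0::real))"
      unfolding iso_card_sum[OF fV] power2_eq_square ..
    also have "\<dots> = (\<Sum>u\<in>V. \<Sum>v\<in>V. (if F \<inter> ?d u = {} then 1 else 0) * (if F \<inter> ?d v = {} then 1 else (0::real)))"
      by (rule sum_product)
    also have "\<dots> = (\<Sum>u\<in>V. \<Sum>v\<in>V. if F \<inter> (?d u \<union> ?d v) = {} then 1 else 0)"
      by (intro sum.cong refl) (auto simp: Int_Un_distrib)
    finally show ?thesis .
  qed
  have "perc_expect E p (\<lambda>F. (real (card (iso V E F)))^2) =
      (\<Sum>u\<in>V. \<Sum>v\<in>V. perc_expect E p (\<lambda>F. if F \<inter> (?d u \<union> ?d v) = {} then 1 else 0))"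
    unfolding sq perc_expect_sum ..
  also have "\<dots> = (\<Sum>u\<in>V. \<Sum>v\<in>V. (1 - p) ^ card (?d u \<union> ?d v))"
    by (intro sum.cong refl, rule closed_prob[OF fE]) blast
  finally show ?thesis .
qed

lemma neighbors_card:
  assumes g: "graph V E" and u: "u \<in> V"
  shows "card {v\<in>V. {e\<in>E. u \<in> e} \<inter> {e\<in>E. v \<in> e} \<noteq> {}} \<le> 2 * card {e\<in>E. u \<in> e}"
proof -
  let ?D = "{e\<in>E. u \<in> e}"
  have fE: "finite E" using graph_E_finite[OF g] .
  have fD: "finite ?D" using fE by simp
  have "{v\<in>V. ?D \<inter> {e\<in>E. v \<in> e} \<noteq> {}} \<subseteq> \<Union>?D" by blast
  moreover have "finite (\<Union>?D)"
  proof (rule finite_Union[OF fD])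
    fix e assume "e \<in> ?D"
    then have "e \<subseteq> V" using graph_edge_sub[OF g] by blast
    then show "finite e" using graph_finite[OF g] finite_subset by blast
  qed
  ultimately have "card {v\<in>V. ?D \<inter> {e\<in>E. v \<in> e} \<noteq> {}} \<le> card (\<Union>?D)" by (rule card_mono[rotated])
  also have "\<dots> \<le> sum card ?D" by (rule card_Union_le_sum_card)
  also have "\<dots> = sum (\<lambda>_. 2) ?D"
  proof (rule sum.cong[OF refl])
    fix e assume "e \<in> ?D"
    then show "card e = 2" using g unfolding graph_def by simp
  qed
  also have "\<dots> = 2 * card ?D" by simp
  finally show ?thesis .
qed

lemma iso_var:
  assumes g: "graph V E" and deg: "\<And>v. v \<in> V \<Longrightarrow> card {e\<in>E. v \<in> e} \<le> d" and p: "0 \<le> p" "p \<le> 1"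
  shows "perc_expect E p (\<lambda>F. (real (card (iso V E F)))^2) - (perc_expect E p (\<lambda>F. real (card (iso V E F))))^2
         \<le> 2 * real d * real (card V)"
proof -
  have fV: "finite V" using graph_finite[OF g] .
  let ?d = "\<lambda>v. {e\<in>E. v \<in> e}"
  let ?q = "1 - p"
  have q: "0 \<le> ?q" "?q \<le> 1" using p by auto
  have "(perc_expect E p (\<lambda>F. real (card (iso V E F))))^2 = (\<Sum>u\<in>V. \<Sum>v\<in>V. ?q ^ card (?d u) * ?q ^ card (?d v))"
    unfolding iso_expect[OF g] power2_eq_square by (rule sum_product)
  then have "perc_expect E p (\<lambda>F. (real (card (iso V E F)))^2) - (perc_expect E p (\<lambda>F. real (card (iso V E F))))^2
     = (\<Sum>u\<in>V. \<Sum>v\<in>V. ?q ^ card (?d u \<union> ?d v) - ?q ^ card (?d u) * ?q ^ card (?d v))"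
    unfolding iso_sq_expect[OF g] by (simp add: sum_subtractf)
  also have "\<dots> \<le> (\<Sum>u\<in>V. \<Sum>v\<in>V. if ?d u \<inter> ?d v \<noteq> {} then 1 else 0)"
  proof (intro sum_mono)
    fix u v assume "u \<in> V" "v \<in> V"
    show "?q ^ card (?d u \<union> ?d v) - ?q ^ card (?d u) * ?q ^ card (?d v) \<le> (if ?d u \<inter> ?d v \<noteq> {} then 1 else 0)"
    proof (cases "?d u \<inter> ?d v = {}")
      case True
      have fE: "finite E" using graph_E_finite[OF g] .
      have "card (?d u \<union> ?d v) = card (?d u) + card (?d v)" using True fE by (simp add: card_Un_disjoint)
      then show ?thesis using True by (simp add: power_add)
    next
      case False
      have "?q ^ card (?d u \<union> ?d v) \<le> 1" using q by (simp add: power_le_one)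
      moreover have "0 \<le> ?q ^ card (?d u) * ?q ^ card (?d v)" using q by simp
      ultimately show ?thesis using False by simp
    qed
  qed
  also have "\<dots> \<le> (\<Sum>u\<in>V. 2 * real d)"
  proof (rule sum_mono)
    fix u assume u: "u \<in> V"
    have "(\<Sum>v\<in>V. if ?d u \<inter> ?d v \<noteq> {} then 1 else 0) = real (card {v\<in>V. ?d u \<inter> ?d v \<noteq> {}})"
      using fV by (simp add: sum.inter_filter[symmetric])
    also have "\<dots> \<le> real (2 * card (?d u))" using neighbors_card[OF g u] by linarith
    also have "\<dots> \<le> 2 * real d" using deg[OF u] by simp
    finally show "(\<Sum>v\<in>V. if ?d u \<inter> ?d v \<noteq> {} then 1 else (0::real)) \<le> 2 * real d" .
  qed
  also have "\<dots> = 2 * real d * real (card V)" by simp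
  finally show ?thesis .
qed

lemma perc_prob_not:
  assumes "finite E"
  shows "perc_prob E p (\<lambda>F. \<not> P F) = 1 - perc_prob E p P"
proof -
  have "perc_prob E p (\<lambda>F. \<not> P F) = perc_expect E p (\<lambda>F. 1 - (if P F then 1 else 0))"
    unfolding perc_prob_expect by (rule perc_expect_cong) simp
  then show ?thesis unfolding perc_expect_diff perc_expect_const[OF assms] perc_prob_expect .
qed

lemma main_graph:
  fixes V :: "'a set" and E :: "'a set set"
  assumes g: "graph V E" and ch: "cheeger V E > b" and b: "b > 0"
    and deg: "\<And>v. v \<in> V \<Longrightarrow> card {e\<in>E. v \<in> e} \<le> d"
    and al: "0 < \<alpha>" "\<alpha> < 1/2" and c: "0 < c" "c < 1"
    and eta: "0 < \<eta>" "\<eta> < 1"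
    and h1: "2 ^ card V * \<eta> powr (b * min (1/4) (1 - c) * real (card V)) < \<alpha>"
    and h2: "4 \<le> card V" and h3: "1 < c * real (card V)"
    and h4: "16 * real d \<le> \<alpha> * \<eta> ^ (2 * d) * real (card V)"
    and h5: "4 \<le> \<eta> ^ d * real (card V)"
    and pin: "p \<in> {p_crit V E \<alpha> c .. p_crit V E (1 - \<alpha>) c}"
  shows "deriv (\<lambda>q. perc_expect E q (\<lambda>F. real (largest_comp V F))) p
           \<ge> b * \<alpha> * min c (\<eta> ^ d / 4) / 2 * real (card V)"
proof -
  define N where "N = real (card V)"
  define A where "A = (\<lambda>F. c * real (card V) \<le> real (largest_comp V F))"
  have fE: "finite E" using graph_E_finite[OF g] .
  have fV: "finite V" using graph_finite[OF g] .
  have V0: "V \<noteq> {}" using h2 by auto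
  have N4: "4 \<le> N" using h2 unfolding N_def by simp
  have incA: "incr_on E A" unfolding incr_on_def A_def
    using L_mono[OF g] by (meson of_nat_le_iff order_trans)
  have A0: "\<not> A {}" unfolding A_def using L_empty[OF g V0] h3 by simp
  have "c * real (card V) \<le> 1 * real (card V)" using c by (intro mult_right_mono) auto
  then have AE: "A E" unfolding A_def using connected_full[OF g ch less_imp_le[OF b] V0] by simp
  have pa: "0 \<le> p_crit V E \<alpha> c \<and> p_crit V E \<alpha> c \<le> 1 \<and> perc_prob E (p_crit V E \<alpha> c) A = \<alpha>"
    unfolding p_crit_def A_def[symmetric] by (rule p_crit_generic[OF fE incA A0 AE]) (use al in auto)
  have pb: "0 \<le> p_crit V E (1 - \<alpha>) c \<and> p_crit V E (1 - \<alpha>) c \<le> 1 \<and> perc_prob E (p_crit V E (1 - \<alpha>) c) A = 1 - \<alpha>"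
    unfolding p_crit_def A_def[symmetric] by (rule p_crit_generic[OF fE incA A0 AE]) (use al in auto)
  have p01: "0 \<le> p" "p \<le> 1" using pin pa pb by auto
  have PA1: "\<alpha> \<le> perc_prob E p A"
    using prob_mono[OF fE incA A0 AE, of "p_crit V E \<alpha> c" p] pin pa p01 by simp
  have PA2: "perc_prob E p A \<le> 1 - \<alpha>"
    using prob_mono[OF fE incA A0 AE, of p "p_crit V E (1 - \<alpha>) c"] pin pb p01 by simp
  have peta: "p < 1 - \<eta>"
  proof (rule ccontr)
    assume "\<not> p < 1 - \<eta>"
    then have le: "1 - \<eta> \<le> p" by simp
    have "perc_prob E (1 - \<eta>) (\<lambda>F. \<not> A F) \<le> 2 ^ card V * (1 - (1 - \<eta>)) powr (b * min (1/4) (1 - c) * real (card V))"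
      unfolding A_def by (rule low_bound[OF g ch b c h2]) (use eta in auto)
    then have "perc_prob E (1 - \<eta>) (\<lambda>F. \<not> A F) < \<alpha>" using h1 by simp
    then have "1 - \<alpha> < perc_prob E (1 - \<eta>) A" unfolding perc_prob_not[OF fE] by simp
    also have "\<dots> \<le> perc_prob E p A" using prob_mono[OF fE incA A0 AE _ le] eta p01 by simp
    finally show False using PA2 by simp
  qed
  define q where "q = 1 - p"
  have q: "\<eta> < q" "q \<le> 1" using peta p01 unfolding q_def by auto
  define X where "X = (\<lambda>F. real (card (iso V E F)))"
  define \<mu> where "\<mu> = perc_expect E p X"
  have mu_eq: "\<mu> = (\<Sum>v\<in>V. q ^ card {e\<in>E. v \<in> e})" unfolding \<mu>_def X_def q_def by (rule iso_expect[OF g])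
  have mu_ge: "N * \<eta> ^ d \<le> \<mu>"
  proof -
    have "(\<Sum>v\<in>V. \<eta> ^ d) \<le> (\<Sum>v\<in>V. q ^ card {e\<in>E. v \<in> e})"
    proof (rule sum_mono)
      fix v assume v: "v \<in> V"
      have "\<eta> ^ d \<le> q ^ d" using q eta by (intro power_mono) auto
      also have "\<dots> \<le> q ^ card {e\<in>E. v \<in> e}" using deg[OF v] q eta by (intro power_decreasing) auto
      finally show "\<eta> ^ d \<le> q ^ card {e\<in>E. v \<in> e}" .
    qed
    then show ?thesis unfolding mu_eq N_def by simp
  qed
  have etad: "0 < \<eta> ^ d" using eta by simp
  have Npos: "0 < N" using N4 by simp
  have mu_pos: "0 < \<mu>" using mu_ge etad Npos by (smt (verit) mult_pos_pos)
  have cheb: "(\<mu> / 2)^2 * perc_prob E p (\<lambda>F. X F < \<mu> / 2) \<le> 2 * real d * N"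
  proof -
    have "(\<mu> / 2)^2 * perc_prob E p (\<lambda>F. X F < \<mu> / 2) \<le> perc_expect E p (\<lambda>F. (X F)^2) - \<mu>^2"
      by (rule chebyshev_low[OF fE p01 \<mu>_def mu_pos])
    also have "\<dots> \<le> 2 * real d * N" unfolding \<mu>_def X_def N_def
      by (rule iso_var[OF g deg p01])
    finally show ?thesis .
  qed
  define PB where "PB = perc_prob E p (\<lambda>F. X F < \<mu> / 2)"
  have PB_small: "PB \<le> \<alpha> / 2"
  proof -
    have PBnn: "0 \<le> PB" unfolding PB_def perc_prob_expect by (rule perc_expect_nonneg[OF p01]) simp
    have "(N * \<eta> ^ d)^2 \<le> \<mu>^2" using mu_ge etad Npos by (intro power_mono) auto
    then have "(N * \<eta> ^ d)^2 * PB \<le> \<mu>^2 * PB" using PBnn by (rule mult_right_mono)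
    also have "\<mu>^2 * PB \<le> 8 * real d * N" using cheb unfolding PB_def by (simp add: power_divide)
    finally have i1: "N * (N * \<eta> ^ (2 * d) * PB) \<le> N * (8 * real d)"
      by (simp add: power2_eq_square power_mult algebra_simps)
    then have i2: "N * \<eta> ^ (2 * d) * PB \<le> 8 * real d" using Npos by simp
    have "16 * real d * PB \<le> \<alpha> * (N * \<eta> ^ (2 * d) * PB)" using h4 PBnn unfolding N_def
      by (metis mult.assoc mult.commute mult_right_mono)
    also have "\<dots> \<le> \<alpha> * (8 * real d)" using i2 al by (intro mult_left_mono) auto
    finally have "16 * real d * PB \<le> 8 * \<alpha> * real d" by simp
    then show ?thesis
    proof (cases "d = 0")
      case True
      then have "N * \<eta> ^ (2 * d) * PB \<le> 0" using i2 by simp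
      then have "PB \<le> 0" using Npos True by (simp add: mult_le_0_iff)
      then show ?thesis using al by simp
    next
      case False
      then have "0 < real d" by simp
      have "(16 * PB) * real d \<le> (8 * \<alpha>) * real d"
        using \<open>16 * real d * PB \<le> 8 * \<alpha> * real d\<close> by (simp add: algebra_simps)
      then have "16 * PB \<le> 8 * \<alpha>" using \<open>0 < real d\<close> by (rule mult_right_le_imp_le)
      then show ?thesis by simp
    qed
  qed
  define M where "M = min c (\<eta> ^ d / 4) * N"
  have Mnn: "0 \<le> M" unfolding M_def using c etad Npos by simp
  have pw: "M * ((if A F then 1 else 0) - (if X F < \<mu> / 2 then 1 else 0))
            \<le> min (real (largest_comp V F)) (N - real (largest_comp V F))" if F: "F \<subseteq> E" for F
  proof -
    have LN: "real (largest_comp V F) \<le> N" using L_le_card[OF g] unfolding N_def by simp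
    have mn: "0 \<le> min (real (largest_comp V F)) (N - real (largest_comp V F))" using LN by simp
    show ?thesis
    proof (cases "A F \<and> \<not> X F < \<mu> / 2")
      case True
      have "X F \<le> N - real (largest_comp V F) + 1" using iso_bound[OF g F V0] unfolding X_def N_def .
      moreover have "N * \<eta> ^ d / 2 \<le> X F" using True mu_ge by simp
      moreover have "4 \<le> N * \<eta> ^ d" using h5 unfolding N_def by (simp add: mult.commute)
      ultimately have "N * \<eta> ^ d / 4 \<le> N - real (largest_comp V F)" unfolding N_def by linarith
      then have m1: "M \<le> N - real (largest_comp V F)" unfolding M_def by (smt (verit) Npos min.cobounded2 mult_right_mono mult.commute times_divide_eq_right)
      have "M \<le> c * N" unfolding M_def using Npos by (simp add: mult_right_mono)
      then have m2: "M \<le> real (largest_comp V F)" using True unfolding A_def N_def by simp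
      show ?thesis using True m1 m2 by simp
    next
      case False
      then have "(if A F then 1 else 0) - (if X F < \<mu> / 2 then 1 else 0) \<le> (0::real)" by auto
      then have "M * ((if A F then 1 else 0) - (if X F < \<mu> / 2 then 1 else 0)) \<le> 0"
        using Mnn by (simp add: mult_nonneg_nonpos)
      then show ?thesis using mn by linarith
    qed
  qed
  have Emin: "M * (\<alpha> / 2) \<le> perc_expect E p (\<lambda>F. min (real (largest_comp V F)) (N - real (largest_comp V F)))"
  proof -
    have "M * (\<alpha> / 2) \<le> M * (perc_prob E p A - PB)" using PA1 PB_small Mnn by (intro mult_left_mono) auto
    also have "\<dots> = perc_expect E p (\<lambda>F. M * ((if A F then 1 else 0) - (if X F < \<mu> / 2 then 1 else 0)))"
      unfolding perc_expect_cmult perc_expect_diff PB_def perc_prob_expect ..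
    also have "\<dots> \<le> perc_expect E p (\<lambda>F. min (real (largest_comp V F)) (N - real (largest_comp V F)))"
      by (rule perc_expect_mono[OF p01 pw])
    finally show ?thesis .
  qed
  have der: "deriv (\<lambda>q. perc_expect E q (\<lambda>F. real (largest_comp V F))) p =
     perc_expect E p (\<lambda>F. \<Sum>e\<in>E. real (largest_comp V (insert e F)) - real (largest_comp V (F - {e})))"
    by (rule DERIV_imp_deriv[OF russo[OF fE]])
  have "b * \<alpha> * min c (\<eta> ^ d / 4) / 2 * real (card V) = b * (M * (\<alpha> / 2))"
    unfolding M_def N_def by (simp add: algebra_simps)
  also have "\<dots> \<le> b * perc_expect E p (\<lambda>F. min (real (largest_comp V F)) (N - real (largest_comp V F)))"
    using Emin b by (simp add: mult_left_mono)
  also have "\<dots> = perc_expect E p (\<lambda>F. b * min (real (largest_comp V F)) (N - real (largest_comp V F)))"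
    unfolding perc_expect_cmult ..
  also have "\<dots> \<le> perc_expect E p (\<lambda>F. \<Sum>e\<in>E. real (largest_comp V (insert e F)) - real (largest_comp V (F - {e})))"
    by (rule perc_expect_mono[OF p01]) (use g_bound[OF g ch less_imp_le[OF b] V0] in \<open>simp add: N_def\<close>)
  finally show ?thesis unfolding der .
qed

lemma deg_bound:
  assumes "graph V E" "max_degree V E \<le> d" "v \<in> V"
  shows "card {e\<in>E. v \<in> e} \<le> d"
proof -
  have "degree E v \<le> max_degree V E" unfolding max_degree_def
    using assms graph_finite[OF assms(1)] by (intro Max_ge) auto
  then show ?thesis using assms(2) unfolding degree_def by simp
qed

theorem lemma4p6:
  fixes b :: real and d :: nat and \<alpha> c :: real
  assumes "b > 0" and "d \<ge> 1" and "0 < \<alpha>" and "\<alpha> < 1/2" and "0 < c" and "c < 1"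
  shows "\<exists>C' > 0. \<forall>(V :: nat \<Rightarrow> 'a set) (E :: nat \<Rightarrow> 'a set set). expander b d V E \<longrightarrow>
           (\<exists>N. \<forall>n. card (V n) \<ge> N \<longrightarrow>
              (\<forall>p \<in> {p_crit (V n) (E n) \<alpha> c .. p_crit (V n) (E n) (1 - \<alpha>) c}.
                 deriv (\<lambda>q. perc_expect (E n) q (\<lambda>F. real (largest_comp (V n) F))) p
                   \<ge> C' * real (card (V n))))"
proof -
  define \<kappa> where "\<kappa> = min (1/4) (1 - c)"
  have kpos: "0 < \<kappa>" unfolding \<kappa>_def using assms by simp
  have bk: "0 < b * \<kappa>" using kpos assms by simp
  define \<eta> where "\<eta> = (1/4::real) powr (1 / (b * \<kappa>))"
  have eta0: "0 < \<eta>" unfolding \<eta>_def by simp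
  have eta1: "\<eta> < 1"
  proof -
    have "(1/4::real) powr (1 / (b * \<kappa>)) < 1 powr (1 / (b * \<kappa>))"
      by (rule powr_less_mono2) (use bk in auto)
    then show ?thesis unfolding \<eta>_def by simp
  qed
  have etad: "0 < \<eta> ^ d" "0 < \<eta> ^ (2 * d)" using eta0 by auto
  define C' where "C' = b * \<alpha> * min c (\<eta> ^ d / 4) / 2"
  have C'pos: "0 < C'" unfolding C'_def using assms etad by simp
  define R where "R = max (max 4 (2 / c)) (max (1 / \<alpha>) (max (16 * real d / (\<alpha> * \<eta> ^ (2 * d))) (4 / \<eta> ^ d)))"
  define N0 where "N0 = nat \<lceil>R\<rceil>"
  show ?thesis
  proof (intro exI[of _ C'] conjI allI impI)
    show "0 < C'" by (rule C'pos)
  next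
    fix V :: "nat \<Rightarrow> 'a set" and E :: "nat \<Rightarrow> 'a set set"
    assume ex: "expander b d V E"
    show "\<exists>N. \<forall>n. card (V n) \<ge> N \<longrightarrow>
              (\<forall>p \<in> {p_crit (V n) (E n) \<alpha> c .. p_crit (V n) (E n) (1 - \<alpha>) c}.
                 deriv (\<lambda>q. perc_expect (E n) q (\<lambda>F. real (largest_comp (V n) F))) p
                   \<ge> C' * real (card (V n)))"
    proof (intro exI[of _ N0] allI impI ballI)
      fix n p assume nN: "N0 \<le> card (V n)"
        and pin: "p \<in> {p_crit (V n) (E n) \<alpha> c .. p_crit (V n) (E n) (1 - \<alpha>) c}"
      define N where "N = real (card (V n))"
      have RN: "R \<le> N" using nN unfolding N0_def N_def by linarith
      have g: "graph (V n) (E n)" and md: "max_degree (V n) (E n) \<le> d" and ch: "cheeger (V n) (E n) > b"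
        using ex unfolding expander_def by auto
      have N4: "4 \<le> N" using RN unfolding R_def by linarith
      have Npos: "0 < N" using N4 by simp
      have h2: "4 \<le> card (V n)" using N4 unfolding N_def by simp
      have "2 / c \<le> N" using RN unfolding R_def by linarith
      then have "2 \<le> c * N" using assms by (simp add: divide_le_eq mult.commute)
      then have h3: "1 < c * real (card (V n))" unfolding N_def by simp
      have "16 * real d / (\<alpha> * \<eta> ^ (2 * d)) \<le> N" using RN unfolding R_def by linarith
      then have h4: "16 * real d \<le> \<alpha> * \<eta> ^ (2 * d) * real (card (V n))"
        using assms etad unfolding N_def by (simp add: divide_le_eq mult.commute)
      have "4 / \<eta> ^ d \<le> N" using RN unfolding R_def by linarith
      then have h5: "4 \<le> \<eta> ^ d * real (card (V n))"
        using etad unfolding N_def by (simp add: divide_le_eq mult.commute)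
      have "1 / \<alpha> \<le> N" using RN unfolding R_def by linarith
      then have aN: "1 \<le> \<alpha> * N" using assms by (simp add: divide_le_eq mult.commute)
      have h1: "2 ^ card (V n) * \<eta> powr (b * min (1/4) (1 - c) * real (card (V n))) < \<alpha>"
      proof -
        have "\<eta> powr (b * \<kappa> * N) = (1/4) powr (1 / (b * \<kappa>) * (b * \<kappa> * N))"
          unfolding \<eta>_def by (rule powr_powr)
        also have "1 / (b * \<kappa>) * (b * \<kappa> * N) = N" using kpos assms(1) by (simp add: field_simps)
        finally have "\<eta> powr (b * \<kappa> * N) = (1/4) ^ card (V n)"
          unfolding N_def by (simp add: powr_realpow)
        moreover have "(2::real) ^ card (V n) * (1/4) ^ card (V n) = (2 * (1/4)) ^ card (V n)"
          by (rule power_mult_distrib[symmetric])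
        ultimately have "2 ^ card (V n) * \<eta> powr (b * \<kappa> * N) = (2 * (1/4)) ^ card (V n)"
          by simp
        also have "\<dots> = 1 / 2 ^ card (V n)" by (simp add: power_divide)
        also have "\<dots> < \<alpha>"
        proof -
          have "real (card (V n)) < 2 ^ card (V n)"
            using less_exp[of "card (V n)"] by (metis of_nat_less_iff of_nat_numeral of_nat_power)
          then have "N < 2 ^ card (V n)" unfolding N_def .
          then have "1 < \<alpha> * 2 ^ card (V n)" using aN assms
            by (smt (verit) mult_strict_left_mono)
          then show ?thesis by (simp add: divide_less_eq mult.commute)
        qed
        finally show ?thesis unfolding \<kappa>_def N_def .
      qed
      have deg: "\<And>v. v \<in> V n \<Longrightarrow> card {e\<in>E n. v \<in> e} \<le> d" using deg_bound[OF g md] .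
      have "b * \<alpha> * min c (\<eta> ^ d / 4) / 2 * real (card (V n))
          \<le> deriv (\<lambda>q. perc_expect (E n) q (\<lambda>F. real (largest_comp (V n) F))) p"
        by (rule main_graph[OF g ch assms(1) deg assms(3,4,5,6) eta0 eta1 h1 h2 h3 h4 h5 pin])
      then show "C' * real (card (V n)) \<le> deriv (\<lambda>q. perc_expect (E n) q (\<lambda>F. real (largest_comp (V n) F))) p"
        unfolding C'_def .
    qed
  qed
qed

end
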